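(* Let $\mathbb X$ be an $L$-structure with $|X|=\kappa\ge\omega$. The following are equivalent: (a) $\mathbb X$ is not reversible; (b) there exists a $\kappa$-closed back and forth system $\Pi\subseteq\mathrm{PC}(\mathbb X)$ containing a bad condensation. Moreover, if $\kappa=\omega$, these are also equivalent to: (c) there exists a back and forth system $\Pi\subseteq\mathrm{PC}(\mathbb X)$ containing a bad condensation.
   Context: $L=\langle R_i:i\in I\rangle$ is a relational language, $R_i$ of arity $n_i$; for an $L$-structure $\mathbb X$ with domain $X$, $R_i^{\mathbb X}$ is the interpretation of $R_i$. For a map $f$ and tuple $\bar x=\langle x_0,\dots,x_{k-1}\rangle$ write $f\bar x=\langle f(x_0),\dots,f(x_{k-1})\rangle$. A partial condensation from $\mathbb X$ to $\mathbb Y$ is a bijection $f$ from a set $\operatorname{dom}f\subseteq X$ onto a set $\operatorname{ran}f\subseteq Y$ such that for all $i\in I$ and $\bar x\in(\operatorname{dom}f)^{n_i}$, $\bar x\in R_i^{\mathbb X}$ implies $f\bar x\in R_i^{\mathbb Y}$; $\mathrm{PC}(\mathbb X,\mathbb Y)$ is the set of these and $\mathrm{PC}(\mathbb X)=\mathrm{PC}(\mathbb X,\mathbb X)$. A condensation is a partial condensation with domain $X$ and range $Y$. $\mathbb X$ is reversible iff every condensation from $\mathbb X$ onto $\mathbb X$ is an automorphism of $\mathbb X$. A finite $f\in\mathrm{PC}(\mathbb X)$ is bad iff there is no automorphism $F$ of $\mathbb X$ with $f\subseteq F$. A back and forth system (b.f.s.) is a nonempty $\Pi\subseteq\mathrm{PC}(\mathbb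 X,\mathbb Y)$ such that (e1) for all $f\in\Pi$ and $x\in X$ there is $g\in\Pi$ with $f\subseteq g$ and $x\in\operatorname{dom}g$, and (e2) for all $f\in\Pi$ and $y\in Y$ there is $g\in\Pi$ with $f\subseteq g$ and $y\in\operatorname{ran}g$. A partial order $\langle P,\le\rangle$ is $\kappa$-closed if for every ordinal $\gamma<\kappa$ and every sequence $\langle p_\alpha:\alpha<\gamma\rangle$ in $P$ with $p_\beta\le p_\alpha$ whenever $\alpha<\beta<\gamma$, there is $p\in P$ with $p\le p_\alpha$ for all $\alpha<\gamma$. A b.f.s. $\Pi$ is $\kappa$-closed if $\langle\Pi,\supseteq\rangle$ is $\kappa$-closed. *)

theory Defs
  imports Main "HOL-Library.Countable_Set"
begin

text \<open>A relational language is given by an index set I and an arity function ar.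
  An L-structure is given by a domain X and interpretations R i, a set of
  tuples (lists) of length ar i with entries in X.\<close>

definition is_structure :: "'i set \<Rightarrow> ('i \<Rightarrow> nat) \<Rightarrow> 'a set \<Rightarrow> ('i \<Rightarrow> 'a list set) \<Rightarrow> bool" where
  "is_structure I ar X R \<longleftrightarrow>
     (\<forall>i\<in>I. \<forall>xs\<in>R i. length xs = ar i \<and> set xs \<subseteq> X)"

text \<open>Partial maps are Isabelle maps ('a \<rightharpoonup> 'b); f \<subseteq> g is map_le.\<close>

definition partial_condensation ::
  "'i set \<Rightarrow> ('i \<Rightarrow> nat) \<Rightarrow> 'a set \<Rightarrow> ('i \<Rightarrow> 'a list set) \<Rightarrow>
   'b set \<Rightarrow> ('i \<Rightarrow> 'b list set) \<Rightarrow> ('a \<rightharpoonup> 'b) \<Rightarrow> bool" where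
  "partial_condensation I ar X RX Y RY f \<longleftrightarrow>
     dom f \<subseteq> X \<and> ran f \<subseteq> Y \<and> inj_on (the \<circ> f) (dom f) \<and>
     (\<forall>i\<in>I. \<forall>xs. length xs = ar i \<and> set xs \<subseteq> dom f \<and> xs \<in> RX i
        \<longrightarrow> map (the \<circ> f) xs \<in> RY i)"

definition PC :: "'i set \<Rightarrow> ('i \<Rightarrow> nat) \<Rightarrow> 'a set \<Rightarrow> ('i \<Rightarrow> 'a list set) \<Rightarrow>
   'b set \<Rightarrow> ('i \<Rightarrow> 'b list set) \<Rightarrow> ('a \<rightharpoonup> 'b) set" where
  "PC I ar X RX Y RY = {f. partial_condensation I ar X RX Y RY f}"

definition condensation ::
  "'i set \<Rightarrow> ('i \<Rightarrow> nat) \<Rightarrow> 'a set \<Rightarrow> ('i \<Rightarrow> 'a list set) \<Rightarrow>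
   'b set \<Rightarrow> ('i \<Rightarrow> 'b list set) \<Rightarrow> ('a \<rightharpoonup> 'b) \<Rightarrow> bool" where
  "condensation I ar X RX Y RY f \<longleftrightarrow>
     partial_condensation I ar X RX Y RY f \<and> dom f = X \<and> ran f = Y"

definition automorphism ::
  "'i set \<Rightarrow> ('i \<Rightarrow> nat) \<Rightarrow> 'a set \<Rightarrow> ('i \<Rightarrow> 'a list set) \<Rightarrow> ('a \<rightharpoonup> 'a) \<Rightarrow> bool" where
  "automorphism I ar X R F \<longleftrightarrow>
     dom F = X \<and> ran F = X \<and> inj_on (the \<circ> F) X \<and>
     (\<forall>i\<in>I. \<forall>xs. length xs = ar i \<and> set xs \<subseteq> X \<longrightarrow>
        (xs \<in> R i \<longleftrightarrow> map (the \<circ> F) xs \<in> R i))"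

definition reversible :: "'i set \<Rightarrow> ('i \<Rightarrow> nat) \<Rightarrow> 'a set \<Rightarrow> ('i \<Rightarrow> 'a list set) \<Rightarrow> bool" where
  "reversible I ar X R \<longleftrightarrow>
     (\<forall>f. condensation I ar X R X R f \<longrightarrow> automorphism I ar X R f)"

definition bad :: "'i set \<Rightarrow> ('i \<Rightarrow> nat) \<Rightarrow> 'a set \<Rightarrow> ('i \<Rightarrow> 'a list set) \<Rightarrow> ('a \<rightharpoonup> 'a) \<Rightarrow> bool" where
  "bad I ar X R f \<longleftrightarrow>
     f \<in> PC I ar X R X R \<and> finite (dom f) \<and>
     \<not> (\<exists>F. automorphism I ar X R F \<and> f \<subseteq>\<^sub>m F)"

definition back_and_forth ::
  "'i set \<Rightarrow> ('i \<Rightarrow> nat) \<Rightarrow> 'a set \<Rightarrow> ('i \<Rightarrow> 'a list set) \<Rightarrow>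
   'b set \<Rightarrow> ('i \<Rightarrow> 'b list set) \<Rightarrow> ('a \<rightharpoonup> 'b) set \<Rightarrow> bool" where
  "back_and_forth I ar X RX Y RY \<Pi> \<longleftrightarrow>
     \<Pi> \<noteq> {} \<and> \<Pi> \<subseteq> PC I ar X RX Y RY \<and>
     (\<forall>f\<in>\<Pi>. \<forall>x\<in>X. \<exists>g\<in>\<Pi>. f \<subseteq>\<^sub>m g \<and> x \<in> dom g) \<and>
     (\<forall>f\<in>\<Pi>. \<forall>y\<in>Y. \<exists>g\<in>\<Pi>. f \<subseteq>\<^sub>m g \<and> y \<in> ran g)"

text \<open>kappa-closedness of a partial order (P, le), where the cardinal kappa is given
  by a cardinal order relation k (e.g. card_of X), and ordinals gamma < kappa are
  represented by well-orders r on the same carrier type with r <o k.\<close>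

definition kappa_closed :: "'c rel \<Rightarrow> 'd set \<Rightarrow> ('d \<Rightarrow> 'd \<Rightarrow> bool) \<Rightarrow> bool" where
  "kappa_closed k P le \<longleftrightarrow>
     (\<forall>(r :: 'c rel) (p :: 'c \<Rightarrow> 'd).
        Well_order r \<and> (r, k) \<in> BNF_Wellorder_Constructions.ordLess \<and>
        (\<forall>\<alpha>\<in>Field r. p \<alpha> \<in> P) \<and>
        (\<forall>\<alpha>\<in>Field r. \<forall>\<beta>\<in>Field r. (\<alpha>, \<beta>) \<in> r \<and> \<alpha> \<noteq> \<beta> \<longrightarrow> le (p \<beta>) (p \<alpha>))
        \<longrightarrow> (\<exists>q\<in>P. \<forall>\<alpha>\<in>Field r. le q (p \<alpha>)))"

definition bfs_kappa_closed :: "'c rel \<Rightarrow> ('a \<rightharpoonup> 'b) set \<Rightarrow> bool" where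
  "bfs_kappa_closed k \<Pi> \<longleftrightarrow> kappa_closed k \<Pi> (\<lambda>g f. f \<subseteq>\<^sub>m g)"

end

theory Submission
  imports Defs
begin

lemma wo_facts:
  assumes "Well_order w"
  shows "\<forall>a\<in>Field w. \<forall>b\<in>Field w. (a,b) \<in> w \<or> (b,a) \<in> w"
    and "a \<in> Field w \<Longrightarrow> (a,a) \<in> w"
    and "trans w"
    and "wf (w - Id)"
  using assms wo_rel.TOTALS[of w] wo_rel.REFL[of w] wo_rel.TRANS[of w]
  by (auto simp: wo_rel_def refl_on_def well_order_on_def)

lemma wo_max:
  assumes "Well_order r" "finite S" "S \<noteq> {}" "S \<subseteq> Field r"
  shows "\<exists>m\<in>S. \<forall>a\<in>S. (a,m) \<in> r"
  using assms(2,3,4)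
proof (induction S rule: finite_ne_induct)
  case (singleton x)
  then show ?case using wo_facts(2)[OF assms(1)] by auto
next
  case (insert x F)
  then obtain m where m: "m \<in> F" "\<forall>a\<in>F. (a,m) \<in> r" by auto
  have xm: "x \<in> Field r" "m \<in> Field r" using insert m by auto
  show ?case
  proof (cases "(m,x) \<in> r")
    case True
    then show ?thesis using m wo_facts(2,3)[OF assms(1)] xm
      by (metis insert_iff transD)
  next
    case False
    then have "(x,m) \<in> r" using wo_facts(1)[OF assms(1)] xm by blast
    then show ?thesis using m by auto
  qed
qed

lemma countable_closed:
  fixes X :: "'a set" and \<Pi> :: "('b \<rightharpoonup> 'c) set"
  assumes "countable X" "\<Pi> \<noteq> {}"
  shows "bfs_kappa_closed (BNF_Cardinal_Order_Relation.card_of X) \<Pi>"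
  unfolding bfs_kappa_closed_def kappa_closed_def
proof (intro allI impI)
  fix r :: "'a rel" and p :: "'a \<Rightarrow> ('b \<rightharpoonup> 'c)"
  assume H: "Well_order r \<and> (r, BNF_Cardinal_Order_Relation.card_of X) \<in> BNF_Wellorder_Constructions.ordLess \<and>
        (\<forall>\<alpha>\<in>Field r. p \<alpha> \<in> \<Pi>) \<and>
        (\<forall>\<alpha>\<in>Field r. \<forall>\<beta>\<in>Field r. (\<alpha>, \<beta>) \<in> r \<and> \<alpha> \<noteq> \<beta> \<longrightarrow> p \<alpha> \<subseteq>\<^sub>m p \<beta>)"
  have "(BNF_Cardinal_Order_Relation.card_of (Field r), BNF_Cardinal_Order_Relation.card_of X) \<in> BNF_Wellorder_Constructions.ordLess" using H ordLess_Field by blast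
  moreover obtain f :: "'a \<Rightarrow> nat" where "inj_on f X" using assms(1) countableE by blast
  then have "(BNF_Cardinal_Order_Relation.card_of X, BNF_Cardinal_Order_Relation.card_of (UNIV :: nat set)) \<in> BNF_Wellorder_Constructions.ordLeq" using card_of_ordLeq by blast
  ultimately have "(BNF_Cardinal_Order_Relation.card_of (Field r), natLeq) \<in> BNF_Wellorder_Constructions.ordLess"
    using card_of_nat ordLess_ordLeq_trans ordLeq_ordIso_trans by blast
  then have fin: "finite (Field r)" using finite_iff_ordLess_natLeq by blast
  show "\<exists>q\<in>\<Pi>. \<forall>\<alpha>\<in>Field r. p \<alpha> \<subseteq>\<^sub>m q"
  proof (cases "Field r = {}")
    case True then show ?thesis using assms(2) by auto
  next
    case False
    then obtain m where m: "m \<in> Field r" "\<forall>a\<in>Field r. (a,m) \<in> r"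
      using wo_max[OF _ fin] H by blast
    show ?thesis
    proof (rule bexI[of _ "p m"])
      show "\<forall>\<alpha>\<in>Field r. p \<alpha> \<subseteq>\<^sub>m p m" using m H by (metis map_le_refl)
      show "p m \<in> \<Pi>" using m H by blast
    qed
  qed
qed


lemma build:
  fixes I :: "'i set" and ar :: "'i \<Rightarrow> nat" and X :: "'a set" and R :: "'i \<Rightarrow> 'a list set"
    and w :: "'a rel"
  assumes bfs: "back_and_forth I ar X R X R \<Pi>" and f0: "f0 \<in> \<Pi>"
    and wo: "Well_order w" and fw: "Field w = X" and ne: "X \<noteq> {}"
    and clos: "\<And>x p. x \<in> X \<Longrightarrow> (\<forall>a\<in>underS w x. p a \<in> \<Pi>) \<Longrightarrow>
        (\<forall>a\<in>underS w x. \<forall>b\<in>underS w x. (a,b) \<in> w \<and> a \<noteq> b \<longrightarrow> p a \<subseteq>\<^sub>m p b) \<Longrightarrow>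
        underS w x \<noteq> {} \<Longrightarrow> (\<exists>q\<in>\<Pi>. \<forall>a\<in>underS w x. p a \<subseteq>\<^sub>m q)"
  shows "\<exists>F. condensation I ar X R X R F \<and> f0 \<subseteq>\<^sub>m F"
proof -
  have PiPC: "\<And>g. g \<in> \<Pi> \<Longrightarrow> partial_condensation I ar X R X R g"
    using bfs unfolding back_and_forth_def PC_def by auto
  have e1: "\<And>g x. g \<in> \<Pi> \<Longrightarrow> x \<in> X \<Longrightarrow> \<exists>h\<in>\<Pi>. g \<subseteq>\<^sub>m h \<and> x \<in> dom h"
    using bfs unfolding back_and_forth_def by blast
  have e2: "\<And>g x. g \<in> \<Pi> \<Longrightarrow> x \<in> X \<Longrightarrow> \<exists>h\<in>\<Pi>. g \<subseteq>\<^sub>m h \<and> x \<in> ran h"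
    using bfs unfolding back_and_forth_def by blast
  define Q where "Q p x = (if underS w x = {} then f0 else SOME q. q \<in> \<Pi> \<and> (\<forall>a\<in>underS w x. p a \<subseteq>\<^sub>m q))"
    for p :: "'a \<Rightarrow> ('a \<rightharpoonup> 'a)" and x
  define G1 where "G1 p x = (SOME g. g \<in> \<Pi> \<and> Q p x \<subseteq>\<^sub>m g \<and> x \<in> dom g)" for p x
  define step where "step p x = (SOME g. g \<in> \<Pi> \<and> G1 p x \<subseteq>\<^sub>m g \<and> x \<in> ran g)" for p x
  have stepcong: "step p x = step p' x" if "\<forall>a\<in>underS w x. p a = p' a" for p p' x
  proof -
    have "Q p x = Q p' x" unfolding Q_def using that by (metis (no_types, lifting))
    then show ?thesis unfolding step_def G1_def by simp
  qed
  define p where "p = wfrec (w - Id) step"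
  have wf: "wf (w - Id)" using wo_facts(4)[OF wo] .
  have peq: "p x = step p x" for x
  proof -
    have "p x = step (cut p (w - Id) x) x" unfolding p_def by (rule wfrec[OF wf])
    also have "\<dots> = step p x" by (rule stepcong) (auto simp: cut_def underS_def)
    finally show ?thesis .
  qed
  have inv: "x \<in> X \<longrightarrow> p x \<in> \<Pi> \<and> f0 \<subseteq>\<^sub>m p x \<and> x \<in> dom (p x) \<and> x \<in> ran (p x) \<and>
      (\<forall>a\<in>underS w x. p a \<subseteq>\<^sub>m p x)" for x
    using wf
  proof (induction x rule: wf_induct_rule)
    case (less x)
    show ?case
    proof
      assume xX: "x \<in> X"
      have uX: "underS w x \<subseteq> X" using fw by (auto simp: underS_def Field_def)
      have IH: "\<And>a. a \<in> underS w x \<Longrightarrow> p a \<in> \<Pi> \<and> f0 \<subseteq>\<^sub>m p a \<and> (\<forall>b\<in>underS w a. p b \<subseteq>\<^sub>m p a)"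
        using less uX by (auto simp: underS_def)
      have coh: "\<forall>a\<in>underS w x. \<forall>b\<in>underS w x. (a,b) \<in> w \<and> a \<noteq> b \<longrightarrow> p a \<subseteq>\<^sub>m p b"
        using IH by (auto simp: underS_def)
      have Qp: "Q p x \<in> \<Pi> \<and> f0 \<subseteq>\<^sub>m Q p x \<and> (\<forall>a\<in>underS w x. p a \<subseteq>\<^sub>m Q p x)"
      proof (cases "underS w x = {}")
        case True then show ?thesis using f0 by (simp add: Q_def map_le_refl)
      next
        case False
        have ex: "\<exists>q. q \<in> \<Pi> \<and> (\<forall>a\<in>underS w x. p a \<subseteq>\<^sub>m q)"
          using clos[OF xX _ coh False] IH by blast
        have "Q p x \<in> \<Pi> \<and> (\<forall>a\<in>underS w x. p a \<subseteq>\<^sub>m Q p x)"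
          unfolding Q_def using False someI_ex[OF ex] by simp
        moreover obtain a where "a \<in> underS w x" using False by blast
        ultimately show ?thesis using IH map_le_trans by blast
      qed
      have ex1: "\<exists>g. g \<in> \<Pi> \<and> Q p x \<subseteq>\<^sub>m g \<and> x \<in> dom g" using e1[OF _ xX] Qp by blast
      have g1: "G1 p x \<in> \<Pi> \<and> Q p x \<subseteq>\<^sub>m G1 p x \<and> x \<in> dom (G1 p x)"
        unfolding G1_def using someI_ex[OF ex1] .
      have ex2: "\<exists>g. g \<in> \<Pi> \<and> G1 p x \<subseteq>\<^sub>m g \<and> x \<in> ran g" using e2[OF _ xX] g1 by blast
      have g2: "step p x \<in> \<Pi> \<and> G1 p x \<subseteq>\<^sub>m step p x \<and> x \<in> ran (step p x)"
        unfolding step_def using someI_ex[OF ex2] .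
      have "x \<in> dom (step p x)" using g1 g2 map_le_implies_dom_le by blast
      then show "p x \<in> \<Pi> \<and> f0 \<subseteq>\<^sub>m p x \<and> x \<in> dom (p x) \<and> x \<in> ran (p x) \<and>
          (\<forall>a\<in>underS w x. p a \<subseteq>\<^sub>m p x)"
        using g1 g2 Qp peq[of x] map_le_trans by metis
    qed
  qed
  have tot: "\<And>a b. a \<in> X \<Longrightarrow> b \<in> X \<Longrightarrow> (a,b) \<in> w \<or> (b,a) \<in> w"
    using wo_facts(1)[OF wo] fw by blast
  have chain: "\<And>a b. a \<in> X \<Longrightarrow> b \<in> X \<Longrightarrow> (a,b) \<in> w \<Longrightarrow> p a \<subseteq>\<^sub>m p b"
  proof -
    fix a b assume "a \<in> X" "b \<in> X" "(a,b) \<in> w"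
    then show "p a \<subseteq>\<^sub>m p b"
      by (cases "a = b") (use inv[of b] in \<open>auto simp: underS_def map_le_refl\<close>)
  qed
  have domX: "\<And>x. x \<in> X \<Longrightarrow> dom (p x) \<subseteq> X" and ranX: "\<And>x. x \<in> X \<Longrightarrow> ran (p x) \<subseteq> X"
    using inv PiPC unfolding partial_condensation_def by blast+
  define F where "F a = (if a \<in> X then p a a else None)" for a
  have sub: "p x \<subseteq>\<^sub>m F" if xX: "x \<in> X" for x
    unfolding map_le_def
  proof
    fix a assume a: "a \<in> dom (p x)"
    then have aX: "a \<in> X" using domX xX by blast
    have "p a a = p x a"
    proof (cases "(x,a) \<in> w")
      case True then show ?thesis using chain[OF xX aX] a by (auto simp: map_le_def)
    next
      case False then have "(a,x) \<in> w" using tot xX aX by blast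
      then have "p a \<subseteq>\<^sub>m p x" using chain xX aX by blast
      then show ?thesis using inv[of a] aX by (auto simp: map_le_def)
    qed
    then show "p x a = F a" using aX by (simp add: F_def)
  qed
  have Fp: "\<And>x a. x \<in> X \<Longrightarrow> a \<in> dom (p x) \<Longrightarrow> F a = p x a"
    using sub by (auto simp: map_le_def)
  have domF: "dom F = X"
    using inv by (auto simp: F_def dom_def)
  have ranF: "ran F = X"
  proof
    show "ran F \<subseteq> X"
    proof
      fix b assume "b \<in> ran F"
      then obtain a where "F a = Some b" by (auto simp: ran_def)
      then have "a \<in> X" "p a a = Some b" by (auto simp: F_def split: if_splits)
      then show "b \<in> X" using ranX by (auto simp: ran_def)
    qed
    show "X \<subseteq> ran F"
    proof
      fix y assume yX: "y \<in> X"
      then obtain a where "p y a = Some y" using inv[of y] by (auto simp: ran_def)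
      then have "F a = Some y" using sub[OF yX] unfolding map_le_def by (metis domI)
      then show "y \<in> ran F" by (auto simp: ran_def)
    qed
  qed
  have two: "\<exists>m\<in>X. a \<in> dom (p m) \<and> b \<in> dom (p m)" if "a \<in> X" "b \<in> X" for a b
  proof (cases "(a,b) \<in> w")
    case True
    then have "a \<in> dom (p b)" using chain[OF that] inv[of a] that map_le_implies_dom_le by blast
    then show ?thesis using that inv[of b] by blast
  next
    case False
    then have "(b,a) \<in> w" using tot that by blast
    then have "b \<in> dom (p a)" using chain that inv[of b] map_le_implies_dom_le by blast
    then show ?thesis using that inv[of a] by blast
  qed
  have cover: "set xs \<subseteq> X \<longrightarrow> (\<exists>m\<in>X. set xs \<subseteq> dom (p m))" for xs
  proof (induction xs)
    case Nil then show ?case using ne by auto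
  next
    case (Cons a xs)
    show ?case
    proof
      assume "set (a # xs) \<subseteq> X"
      then obtain m where m: "m \<in> X" "set xs \<subseteq> dom (p m)" and aX: "a \<in> X" using Cons by auto
      show "\<exists>m\<in>X. set (a # xs) \<subseteq> dom (p m)"
      proof (cases "(m,a) \<in> w")
        case True
        then have "dom (p m) \<subseteq> dom (p a)" using chain m aX map_le_implies_dom_le by blast
        moreover have "a \<in> dom (p a)" using aX inv[of a] by blast
        ultimately show ?thesis using m aX by (intro bexI[of _ a]) auto
      next
        case False
        then have "(a,m) \<in> w" using tot m aX by blast
        then have "dom (p a) \<subseteq> dom (p m)" using chain m aX map_le_implies_dom_le by blast
        moreover have "a \<in> dom (p a)" using aX inv[of a] by blast
        ultimately show ?thesis using m aX by (intro bexI[of _ m]) auto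
      qed
    qed
  qed
  have PCF: "partial_condensation I ar X R X R F"
    unfolding partial_condensation_def
  proof (intro conjI)
    show "dom F \<subseteq> X" "ran F \<subseteq> X" using domF ranF by auto
    show "inj_on (the \<circ> F) (dom F)"
    proof (rule inj_onI)
      fix a b assume ab: "a \<in> dom F" "b \<in> dom F" "(the \<circ> F) a = (the \<circ> F) b"
      then obtain m where m: "m \<in> X" "a \<in> dom (p m)" "b \<in> dom (p m)" using two domF by blast
      have "inj_on (the \<circ> p m) (dom (p m))" using PiPC inv m(1) unfolding partial_condensation_def by blast
      moreover have "(the \<circ> p m) a = (the \<circ> p m) b" using ab Fp[OF m(1) m(2)] Fp[OF m(1) m(3)] by simp
      ultimately show "a = b" using m(2,3) by (meson inj_onD)
    qed
    show "\<forall>i\<in>I. \<forall>xs. length xs = ar i \<and> set xs \<subseteq> dom F \<and> xs \<in> R i \<longrightarrow> map (the \<circ> F) xs \<in> R i"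
    proof (intro ballI allI impI)
      fix i xs assume i: "i \<in> I" and H: "length xs = ar i \<and> set xs \<subseteq> dom F \<and> xs \<in> R i"
      then obtain m where m: "m \<in> X" "set xs \<subseteq> dom (p m)" using cover domF by blast
      have "map (the \<circ> F) xs = map (the \<circ> p m) xs" proof (rule map_cong[OF refl])
        fix a assume "a \<in> set xs"
        then have "F a = p m a" using Fp[OF m(1)] m(2) by blast
        then show "(the \<circ> F) a = (the \<circ> p m) a" by simp
      qed
      moreover have "map (the \<circ> p m) xs \<in> R i"
        using PiPC inv m H i unfolding partial_condensation_def by blast
      ultimately show "map (the \<circ> F) xs \<in> R i" by (simp only:)
    qed
  qed
  obtain x0 where "x0 \<in> X" using ne by blast
  then have "f0 \<subseteq>\<^sub>m F" using inv[of x0] sub map_le_trans by blast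
  then show ?thesis using PCF domF ranF unfolding condensation_def by blast
qed


lemma restr_PC:
  assumes "partial_condensation I ar X R X R f"
  shows "partial_condensation I ar X R X R (f |` A)"
  unfolding partial_condensation_def
proof (intro conjI)
  have d: "dom (f |` A) \<subseteq> dom f" by auto
  have e: "\<And>a. a \<in> dom (f |` A) \<Longrightarrow> (f |` A) a = f a" by (auto simp: restrict_map_def split: if_splits)
  show "dom (f |` A) \<subseteq> X" using assms d unfolding partial_condensation_def by blast
  show "ran (f |` A) \<subseteq> X" using assms unfolding partial_condensation_def
    by (auto simp: ran_def restrict_map_def split: if_splits)
  show "inj_on (the \<circ> f |` A) (dom (f |` A))"
  proof (rule inj_onI)
    fix a b assume ab: "a \<in> dom (f |` A)" "b \<in> dom (f |` A)" "(the \<circ> f |` A) a = (the \<circ> f |` A) b"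
    then have "(the \<circ> f) a = (the \<circ> f) b" using e by simp
    then show "a = b" using assms ab d unfolding partial_condensation_def by (meson inj_onD subsetD)
  qed
  show "\<forall>i\<in>I. \<forall>xs. length xs = ar i \<and> set xs \<subseteq> dom (f |` A) \<and> xs \<in> R i \<longrightarrow> map (the \<circ> f |` A) xs \<in> R i"
  proof (intro ballI allI impI)
    fix i xs assume i: "i \<in> I" and H: "length xs = ar i \<and> set xs \<subseteq> dom (f |` A) \<and> xs \<in> R i"
    have "map (the \<circ> f |` A) xs = map (the \<circ> f) xs"
    proof (rule map_cong[OF refl])
      fix a assume "a \<in> set xs"
      then have "(f |` A) a = f a" using e H by blast
      then show "(the \<circ> f |` A) a = (the \<circ> f) a" by simp
    qed
    moreover have "map (the \<circ> f) xs \<in> R i" using assms i H d unfolding partial_condensation_def by blast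
    ultimately show "map (the \<circ> f |` A) xs \<in> R i" by (simp only:)
  qed
qed

lemma nonrev_bfs:
  assumes "\<not> reversible I ar X R"
  shows "\<exists>\<Pi>. back_and_forth I ar X R X R \<Pi> \<and> (\<forall>k :: 'c rel. bfs_kappa_closed k \<Pi>) \<and> (\<exists>f\<in>\<Pi>. bad I ar X R f)"
proof -
  obtain f where cf: "condensation I ar X R X R f" and na: "\<not> automorphism I ar X R f"
    using assms unfolding reversible_def by blast
  have pf: "partial_condensation I ar X R X R f" and df: "dom f = X" and rf: "ran f = X"
    using cf unfolding condensation_def by auto
  have inj: "inj_on (the \<circ> f) X" using pf df unfolding partial_condensation_def by auto
  obtain i xs where i: "i \<in> I" "length xs = ar i" "set xs \<subseteq> X"
    and nr: "\<not> (xs \<in> R i \<longleftrightarrow> map (the \<circ> f) xs \<in> R i)"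
    using na df rf inj unfolding automorphism_def by blast
  have "xs \<in> R i \<longrightarrow> map (the \<circ> f) xs \<in> R i" using pf i df unfolding partial_condensation_def by blast
  then have xs: "xs \<notin> R i" "map (the \<circ> f) xs \<in> R i" using nr by auto
  define f1 where "f1 = f |` set xs"
  have pf1: "partial_condensation I ar X R X R f1" unfolding f1_def using restr_PC[OF pf] .
  have le: "f1 \<subseteq>\<^sub>m f" unfolding f1_def by (auto simp: map_le_def)
  have badf1: "bad I ar X R f1"
    unfolding bad_def
  proof (intro conjI)
    show "f1 \<in> PC I ar X R X R" using pf1 by (simp add: PC_def)
    show "finite (dom f1)" unfolding f1_def by (rule finite_subset[of _ "set xs"]) auto
    show "\<not> (\<exists>F. automorphism I ar X R F \<and> f1 \<subseteq>\<^sub>m F)"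
    proof
      assume "\<exists>F. automorphism I ar X R F \<and> f1 \<subseteq>\<^sub>m F"
      then obtain F where aF: "automorphism I ar X R F" and sF: "f1 \<subseteq>\<^sub>m F" by blast
      have "map (the \<circ> F) xs = map (the \<circ> f) xs"
      proof (rule map_cong[OF refl])
        fix a assume a: "a \<in> set xs"
        then have "a \<in> dom f1" using df i(3) unfolding f1_def by auto
        then have "F a = f a" using sF a unfolding map_le_def f1_def by auto
        then show "(the \<circ> F) a = (the \<circ> f) a" by simp
      qed
      then have "map (the \<circ> F) xs \<in> R i" using xs by (simp only:)
      then have "xs \<in> R i" using aF i unfolding automorphism_def by blast
      then show False using xs by blast
    qed
  qed
  let ?P = "{f, f1}"
  have "back_and_forth I ar X R X R ?P"
    unfolding back_and_forth_def using pf pf1 le df rf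
    by (auto simp: PC_def map_le_refl)
  moreover have "bfs_kappa_closed k ?P" for k :: "'c rel"
    unfolding bfs_kappa_closed_def kappa_closed_def
    using le by (metis insertCI insertE map_le_refl singletonD)
  ultimately show ?thesis using badf1 by blast
qed

lemma bfs_nonrev:
  assumes bfs: "back_and_forth I ar X R X R \<Pi>"
    and cl: "bfs_kappa_closed (BNF_Cardinal_Order_Relation.card_of X) \<Pi>"
    and bd: "f0 \<in> \<Pi>" "bad I ar X R f0" and ne: "X \<noteq> {}"
  shows "\<not> reversible I ar X R"
proof -
  let ?w = "BNF_Cardinal_Order_Relation.card_of X"
  have wo: "Well_order ?w" by (rule card_of_Well_order)
  have fw: "Field ?w = X" by (rule Field_card_of)
  have "\<exists>F. condensation I ar X R X R F \<and> f0 \<subseteq>\<^sub>m F"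
  proof (rule build[OF bfs bd(1) wo fw ne])
    fix x p assume xX: "x \<in> X" and pP: "\<forall>a\<in>underS ?w x. p a \<in> \<Pi>"
      and coh: "\<forall>a\<in>underS ?w x. \<forall>b\<in>underS ?w x. (a,b) \<in> ?w \<and> a \<noteq> b \<longrightarrow> p a \<subseteq>\<^sub>m p b"
    let ?r = "Restr ?w (underS ?w x)"
    have wr: "Well_order ?r" using Well_order_Restr[OF wo] .
    have fr: "Field ?r = underS ?w x"
      using Field_Restr_ofilter[OF wo] wo_rel.underS_ofilter[of ?w x] wo by (simp add: wo_rel_def)
    have lr: "(?r, ?w) \<in> BNF_Wellorder_Constructions.ordLess"
      using Card_order_iff_Restr_underS[OF wo] card_of_Card_order[of X] xX fw by metis
    have "\<exists>q\<in>\<Pi>. \<forall>\<alpha>\<in>Field ?r. p \<alpha> \<subseteq>\<^sub>m q"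
      using cl wr lr pP coh fr unfolding bfs_kappa_closed_def kappa_closed_def
      by (smt (verit) IntE)
    then show "\<exists>q\<in>\<Pi>. \<forall>a\<in>underS ?w x. p a \<subseteq>\<^sub>m q" using fr by simp
  qed
  then obtain F where cF: "condensation I ar X R X R F" and sF: "f0 \<subseteq>\<^sub>m F" by blast
  show ?thesis
  proof
    assume "reversible I ar X R"
    then have "automorphism I ar X R F" using cF unfolding reversible_def by blast
    then show False using bd(2) sF unfolding bad_def by blast
  qed
qed

theorem theorem3p4:
  fixes I :: "'i set" and ar :: "'i \<Rightarrow> nat" and X :: "'a set" and R :: "'i \<Rightarrow> 'a list set"
  assumes "is_structure I ar X R"
    and "infinite X"
  shows "(\<not> reversible I ar X R \<longleftrightarrow>
           (\<exists>\<Pi>. back_and_forth I ar X R X R \<Pi> \<and>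
                 bfs_kappa_closed (BNF_Cardinal_Order_Relation.card_of X) \<Pi> \<and>
                 (\<exists>f\<in>\<Pi>. bad I ar X R f)))
       \<and> (countable X \<longrightarrow>
           (\<not> reversible I ar X R \<longleftrightarrow>
             (\<exists>\<Pi>. back_and_forth I ar X R X R \<Pi> \<and> (\<exists>f\<in>\<Pi>. bad I ar X R f))))"
proof -
  have ne: "X \<noteq> {}" using assms(2) by auto
  have A: "\<not> reversible I ar X R \<longleftrightarrow>
           (\<exists>\<Pi>. back_and_forth I ar X R X R \<Pi> \<and>
                 bfs_kappa_closed (BNF_Cardinal_Order_Relation.card_of X) \<Pi> \<and>
                 (\<exists>f\<in>\<Pi>. bad I ar X R f))"
    using nonrev_bfs[of I ar X R] bfs_nonrev[OF _ _ _ _ ne] by metis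
  moreover have "countable X \<longrightarrow>
           (\<not> reversible I ar X R \<longleftrightarrow>
             (\<exists>\<Pi>. back_and_forth I ar X R X R \<Pi> \<and> (\<exists>f\<in>\<Pi>. bad I ar X R f)))"
  proof
    assume c: "countable X"
    show "\<not> reversible I ar X R \<longleftrightarrow>
             (\<exists>\<Pi>. back_and_forth I ar X R X R \<Pi> \<and> (\<exists>f\<in>\<Pi>. bad I ar X R f))"
    proof
      assume "\<not> reversible I ar X R"
      then show "\<exists>\<Pi>. back_and_forth I ar X R X R \<Pi> \<and> (\<exists>f\<in>\<Pi>. bad I ar X R f)" using A by blast
    next
      assume "\<exists>\<Pi>. back_and_forth I ar X R X R \<Pi> \<and> (\<exists>f\<in>\<Pi>. bad I ar X R f)"
      then obtain \<Pi> f where b: "back_and_forth I ar X R X R \<Pi>" "f \<in> \<Pi>" "bad I ar X R f" by blast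
      have "bfs_kappa_closed (BNF_Cardinal_Order_Relation.card_of X) \<Pi>"
        using countable_closed[OF c] b(2) by blast
      then show "\<not> reversible I ar X R" using bfs_nonrev[OF b(1) _ b(2,3) ne] by blast
    qed
  qed
  ultimately show ?thesis by blast
qed

end
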